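(* Let $(X,\tau)$ be a topological space and let $\delta$ be a quasi-proximity on $X$ compatible with $\tau$ (i.e. $\tau(\delta)=\tau$) such that $\mathcal{V}_\delta$ is transitive. Let $\mathcal{V}\in T(\tau)$ with $\mathcal{V}_\delta\subseteq\mathcal{V}$. Then $\mathcal{V}\in\pi(\delta)$ if and only if for every $N\in\tau$ with $U_N\in\mathcal{V}$ we have $N\in\mathcal{B}(\mathcal{V}_\delta)$.
   Context: Quasi-uniformities and quasi-proximities are in the sense of Fletcher–Lindgren. For a quasi-uniformity $\mathcal{V}$ on $X$, $\tau(\mathcal{V})$ and $\delta(\mathcal{V})$ denote the topology and the quasi-proximity induced by $\mathcal{V}$; $\tau(\delta)$ is the topology induced by a quasi-proximity $\delta$. A quasi-uniformity $\mathcal{V}$ on $(X,\tau)$ is compatible if $\tau(\mathcal{V})=\tau$; it is transitive if it has a base of transitive entourages ($U\circ U\subseteq U$). $T(\tau)$ denotes the set of all compatible transitive quasi-uniformities on $(X,\tau)$. For a quasi-proximity $\delta$, $\pi(\delta)=\{\mathcal{V}:\mathcal{V}$ a quasi-uniformity on $X$ with $\delta(\mathcal{V})=\delta\}$; it is nonempty and has a coarsest element, denoted $\mathcal{V}_\delta$, which is totally bounded (and the only totally bounded member of $\pi(\delta)$). For $N\subseteq X$, $U_N=(N\times N)\cup((X\setminus N)\times X)$. For a quasi-uniformity $\mathcal{V}$ compatible with $\tau$, $\mathcal{B}(\mathcal{V})=\{N\in\tau: U_N\in\mathcal{V}\}$; when $\mathcal{V}$ is totally bounded and transitive this is an l-base,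 i.e. a base for $\tau$ closed under finite unions and finite intersections and containing $\emptyset$ and $X$. *)

theory Defs
  imports "HOL-Analysis.Analysis"
begin

definition quasi_uniformity :: "'a set \<Rightarrow> ('a \<times> 'a) set set \<Rightarrow> bool" where
  "quasi_uniformity X \<V> \<longleftrightarrow>
     \<V> \<subseteq> Pow (X \<times> X) \<and> \<V> \<noteq> {} \<and>
     (\<forall>U\<in>\<V>. \<forall>W. U \<subseteq> W \<and> W \<subseteq> X \<times> X \<longrightarrow> W \<in> \<V>) \<and>
     (\<forall>U\<in>\<V>. \<forall>W\<in>\<V>. U \<inter> W \<in> \<V>) \<and>
     (\<forall>U\<in>\<V>. Id_on X \<subseteq> U) \<and>
     (\<forall>U\<in>\<V>. \<exists>W\<in>\<V>. W O W \<subseteq> U)"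

definition qu_open :: "'a set \<Rightarrow> ('a \<times> 'a) set set \<Rightarrow> 'a set \<Rightarrow> bool" where
  "qu_open X \<V> G \<longleftrightarrow> G \<subseteq> X \<and> (\<forall>x\<in>G. \<exists>U\<in>\<V>. U `` {x} \<subseteq> G)"

definition qu_compatible :: "'a topology \<Rightarrow> ('a \<times> 'a) set set \<Rightarrow> bool" where
  "qu_compatible T \<V> \<longleftrightarrow> (\<forall>G. openin T G \<longleftrightarrow> qu_open (topspace T) \<V> G)"

definition qu_transitive :: "('a \<times> 'a) set set \<Rightarrow> bool" where
  "qu_transitive \<V> \<longleftrightarrow> (\<forall>U\<in>\<V>. \<exists>W\<in>\<V>. W \<subseteq> U \<and> W O W \<subseteq> W)"

definition Trans_qu :: "'a topology \<Rightarrow> ('a \<times> 'a) set set set" where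
  "Trans_qu T = {\<V>. quasi_uniformity (topspace T) \<V> \<and> qu_compatible T \<V> \<and> qu_transitive \<V>}"

definition quasi_proximity :: "'a set \<Rightarrow> ('a set \<Rightarrow> 'a set \<Rightarrow> bool) \<Rightarrow> bool" where
  "quasi_proximity X \<delta> \<longleftrightarrow>
     (\<forall>A B. \<delta> A B \<longrightarrow> A \<subseteq> X \<and> B \<subseteq> X) \<and>
     (\<forall>A\<subseteq>X. \<not> \<delta> A {} \<and> \<not> \<delta> {} A) \<and>
     (\<forall>A\<subseteq>X. \<forall>B\<subseteq>X. \<forall>C\<subseteq>X. \<delta> A (B \<union> C) \<longleftrightarrow> \<delta> A B \<or> \<delta> A C) \<and>
     (\<forall>A\<subseteq>X. \<forall>B\<subseteq>X. \<forall>C\<subseteq>X. \<delta> (A \<union> B) C \<longleftrightarrow> \<delta> A C \<or> \<delta> B C) \<and>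
     (\<forall>x\<in>X. \<delta> {x} {x}) \<and>
     (\<forall>A\<subseteq>X. \<forall>B\<subseteq>X. \<not> \<delta> A B \<longrightarrow> (\<exists>C\<subseteq>X. \<not> \<delta> A C \<and> \<not> \<delta> (X - C) B))"

definition qp_open :: "'a set \<Rightarrow> ('a set \<Rightarrow> 'a set \<Rightarrow> bool) \<Rightarrow> 'a set \<Rightarrow> bool" where
  "qp_open X \<delta> G \<longleftrightarrow> G \<subseteq> X \<and> (\<forall>x\<in>G. \<not> \<delta> {x} (X - G))"

definition qu_proximity :: "'a set \<Rightarrow> ('a \<times> 'a) set set \<Rightarrow> 'a set \<Rightarrow> 'a set \<Rightarrow> bool" where
  "qu_proximity X \<V> A B \<longleftrightarrow> A \<subseteq> X \<and> B \<subseteq> X \<and> (\<forall>U\<in>\<V>. (A \<times> B) \<inter> U \<noteq> {})"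

definition prox_class :: "'a set \<Rightarrow> ('a set \<Rightarrow> 'a set \<Rightarrow> bool) \<Rightarrow> ('a \<times> 'a) set set set" where
  "prox_class X \<delta> = {\<V>. quasi_uniformity X \<V> \<and> qu_proximity X \<V> = \<delta>}"

definition coarsest_qu :: "'a set \<Rightarrow> ('a set \<Rightarrow> 'a set \<Rightarrow> bool) \<Rightarrow> ('a \<times> 'a) set set" where
  "coarsest_qu X \<delta> = (THE \<V>. \<V> \<in> prox_class X \<delta> \<and> (\<forall>\<W>\<in>prox_class X \<delta>. \<V> \<subseteq> \<W>))"

definition U_set :: "'a set \<Rightarrow> 'a set \<Rightarrow> ('a \<times> 'a) set" where
  "U_set X N = (N \<times> N) \<union> ((X - N) \<times> X)"

definition B_set :: "'a topology \<Rightarrow> ('a \<times> 'a) set set \<Rightarrow> 'a set set" where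
  "B_set T \<V> = {N. openin T N \<and> U_set (topspace T) N \<in> \<V>}"

end

theory Submission
  imports Defs
begin

lemma qpC1: "quasi_proximity X \<delta> \<Longrightarrow> \<forall>A B. \<delta> A B \<longrightarrow> A \<subseteq> X \<and> B \<subseteq> X"
  unfolding quasi_proximity_def by (rule conjunct1)
lemma qpC2: "quasi_proximity X \<delta> \<Longrightarrow> \<forall>A\<subseteq>X. \<not> \<delta> A {} \<and> \<not> \<delta> {} A"
  unfolding quasi_proximity_def by (rule conjunct1[OF conjunct2])
lemma qpC3: "quasi_proximity X \<delta> \<Longrightarrow> \<forall>A\<subseteq>X. \<forall>B\<subseteq>X. \<forall>C\<subseteq>X. \<delta> A (B \<union> C) \<longleftrightarrow> \<delta> A B \<or> \<delta> A C"
  unfolding quasi_proximity_def by (rule conjunct1[OF conjunct2[OF conjunct2]])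
lemma qpC4: "quasi_proximity X \<delta> \<Longrightarrow> \<forall>A\<subseteq>X. \<forall>B\<subseteq>X. \<forall>C\<subseteq>X. \<delta> (A \<union> B) C \<longleftrightarrow> \<delta> A C \<or> \<delta> B C"
  unfolding quasi_proximity_def by (rule conjunct1[OF conjunct2[OF conjunct2[OF conjunct2]]])
lemma qpC5: "quasi_proximity X \<delta> \<Longrightarrow> \<forall>x\<in>X. \<delta> {x} {x}"
  unfolding quasi_proximity_def by (rule conjunct1[OF conjunct2[OF conjunct2[OF conjunct2[OF conjunct2]]]])
lemma qpC6: "quasi_proximity X \<delta> \<Longrightarrow> \<forall>A\<subseteq>X. \<forall>B\<subseteq>X. \<not> \<delta> A B \<longrightarrow> (\<exists>C\<subseteq>X. \<not> \<delta> A C \<and> \<not> \<delta> (X - C) B)"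
  unfolding quasi_proximity_def by (rule conjunct2[OF conjunct2[OF conjunct2[OF conjunct2[OF conjunct2]]]])

lemma qp_sub: "quasi_proximity X \<delta> \<Longrightarrow> \<delta> A B \<Longrightarrow> A \<subseteq> X \<and> B \<subseteq> X"
  using qpC1 by blast
lemma qp_ul: "quasi_proximity X \<delta> \<Longrightarrow> A \<subseteq> X \<Longrightarrow> B \<subseteq> X \<Longrightarrow> C \<subseteq> X \<Longrightarrow> \<delta> (A \<union> B) C \<longleftrightarrow> \<delta> A C \<or> \<delta> B C"
  using qpC4 by blast
lemma qp_ur: "quasi_proximity X \<delta> \<Longrightarrow> A \<subseteq> X \<Longrightarrow> B \<subseteq> X \<Longrightarrow> C \<subseteq> X \<Longrightarrow> \<delta> A (B \<union> C) \<longleftrightarrow> \<delta> A B \<or> \<delta> A C"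
  using qpC3 by blast
lemma qp_empty: "quasi_proximity X \<delta> \<Longrightarrow> A \<subseteq> X \<Longrightarrow> \<not> \<delta> A {} \<and> \<not> \<delta> {} A"
  using qpC2 by blast
lemma qp_refl: "quasi_proximity X \<delta> \<Longrightarrow> x \<in> X \<Longrightarrow> \<delta> {x} {x}"
  using qpC5 by blast
lemma qp_split: "quasi_proximity X \<delta> \<Longrightarrow> A \<subseteq> X \<Longrightarrow> B \<subseteq> X \<Longrightarrow> \<not> \<delta> A B \<Longrightarrow> \<exists>C\<subseteq>X. \<not> \<delta> A C \<and> \<not> \<delta> (X - C) B"
  using qpC6 by blast

lemma qp_mono:
  assumes qp: "quasi_proximity X \<delta>" and d: "\<delta> A B" and "A \<subseteq> A'" "B \<subseteq> B'" "A' \<subseteq> X" "B' \<subseteq> X"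
  shows "\<delta> A' B'"
proof -
  from qp_sub[OF qp d] have AX: "A \<subseteq> X" and BX: "B \<subseteq> X" by auto
  have "\<delta> (A \<union> A') B" using qp_ul[OF qp AX assms(5) BX] d by simp
  hence 1: "\<delta> A' B" using assms(3) by (simp add: Un_absorb1)
  have "\<delta> A' (B \<union> B')" using qp_ur[OF qp assms(5) BX assms(6)] 1 by simp
  thus ?thesis using assms(4) by (simp add: Un_absorb1)
qed

lemma qp_cover:
  assumes qp: "quasi_proximity X \<delta>" and fin: "finite F"
  shows "(\<forall>(P,Q)\<in>F. P \<subseteq> X \<and> Q \<subseteq> X \<and> \<not> \<delta> P Q) \<Longrightarrow> A \<subseteq> X \<Longrightarrow> B \<subseteq> X \<Longrightarrow>
     (\<forall>a\<in>A. \<forall>b\<in>B. \<exists>p\<in>F. a \<in> fst p \<and> b \<in> snd p) \<Longrightarrow> \<not> \<delta> A B"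
  using fin
proof (induction F arbitrary: A B rule: finite_induct)
  case empty
  then have "A = {} \<or> B = {}" by blast
  then show ?case using qp_empty[OF qp] empty(2,3) by blast
next
  case (insert p F)
  obtain P Q where p: "p = (P,Q)" by (cases p) simp
  have PQ: "P \<subseteq> X" "Q \<subseteq> X" "\<not> \<delta> P Q" using insert(4) p by auto
  have F: "\<forall>(P,Q)\<in>F. P \<subseteq> X \<and> Q \<subseteq> X \<and> \<not> \<delta> P Q" using insert(4) by blast
  have cov: "\<forall>a\<in>A. \<forall>b\<in>B. (a \<in> P \<and> b \<in> Q) \<or> (\<exists>p\<in>F. a \<in> fst p \<and> b \<in> snd p)"
    using insert(7) p by auto
  have n1: "\<not> \<delta> (A \<inter> P) (B \<inter> Q)"
    using qp_mono[OF qp, of "A \<inter> P" "B \<inter> Q" P Q] PQ by blast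
  have n2: "\<not> \<delta> (A \<inter> P) (B - Q)"
    apply (rule insert(3)[OF F]) using insert(5,6) cov by blast+
  have n3: "\<not> \<delta> (A - P) (B \<inter> Q)"
    apply (rule insert(3)[OF F]) using insert(5,6) cov by blast+
  have n4: "\<not> \<delta> (A - P) (B - Q)"
    apply (rule insert(3)[OF F]) using insert(5,6) cov by blast+
  have s: "A \<inter> P \<subseteq> X" "A - P \<subseteq> X" "B \<inter> Q \<subseteq> X" "B - Q \<subseteq> X" using insert(5,6) by auto
  have eA: "A = (A \<inter> P) \<union> (A - P)" and eB: "B = (B \<inter> Q) \<union> (B - Q)" by auto
  have "\<delta> A B \<longleftrightarrow> \<delta> ((A \<inter> P) \<union> (A - P)) ((B \<inter> Q) \<union> (B - Q))" by (rule arg_cong2[where f=\<delta>, OF eA eB])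
  also have "\<dots> \<longleftrightarrow> (\<delta> (A \<inter> P) ((B \<inter> Q) \<union> (B - Q)) \<or> \<delta> (A - P) ((B \<inter> Q) \<union> (B - Q)))"
    using qp_ul[OF qp s(1,2), of "(B \<inter> Q) \<union> (B - Q)"] s(3,4) by (simp only: Un_subset_iff simp_thms)
  also have "\<dots> \<longleftrightarrow> False"
    using n1 n2 n3 n4 by (simp only: qp_ur[OF qp s(1) s(3,4)] qp_ur[OF qp s(2) s(3,4)] simp_thms)
  finally show ?case by simp
qed


definition Sfar :: "'a set \<Rightarrow> 'a set \<Rightarrow> 'a set \<Rightarrow> ('a \<times> 'a) set" where
  "Sfar X A B = ((X - A) \<times> X) \<union> (X \<times> (X - B))"
definition farpairs :: "'a set \<Rightarrow> ('a set \<Rightarrow> 'a set \<Rightarrow> bool) \<Rightarrow> ('a set \<times> 'a set) set" where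
  "farpairs X \<delta> = {(A,B). A \<subseteq> X \<and> B \<subseteq> X \<and> \<not> \<delta> A B}"
definition V0 :: "'a set \<Rightarrow> ('a set \<Rightarrow> 'a set \<Rightarrow> bool) \<Rightarrow> ('a \<times> 'a) set set" where
  "V0 X \<delta> = {U. U \<subseteq> X \<times> X \<and> (\<exists>F. finite F \<and> F \<subseteq> farpairs X \<delta> \<and>
      (X \<times> X) \<inter> \<Inter> ((\<lambda>p. Sfar X (fst p) (snd p)) ` F) \<subseteq> U)}"

lemma V0I: "U \<subseteq> X \<times> X \<Longrightarrow> finite F \<Longrightarrow> F \<subseteq> farpairs X \<delta> \<Longrightarrow>
      (X \<times> X) \<inter> \<Inter> ((\<lambda>p. Sfar X (fst p) (snd p)) ` F) \<subseteq> U \<Longrightarrow> U \<in> V0 X \<delta>"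
  unfolding V0_def by blast

lemma V0E: "U \<in> V0 X \<delta> \<Longrightarrow> (\<And>F. U \<subseteq> X \<times> X \<Longrightarrow> finite F \<Longrightarrow> F \<subseteq> farpairs X \<delta> \<Longrightarrow>
      (X \<times> X) \<inter> \<Inter> ((\<lambda>p. Sfar X (fst p) (snd p)) ` F) \<subseteq> U \<Longrightarrow> thesis) \<Longrightarrow> thesis"
  unfolding V0_def by blast

lemma Sfar_diag:
  assumes qp: "quasi_proximity X \<delta>" and "p \<in> farpairs X \<delta>"
  shows "Id_on X \<subseteq> Sfar X (fst p) (snd p)"
proof
  fix q assume "q \<in> Id_on X"
  then obtain x where q: "q = (x,x)" "x \<in> X" by auto
  have AB: "fst p \<subseteq> X" "snd p \<subseteq> X" "\<not> \<delta> (fst p) (snd p)" using assms(2) unfolding farpairs_def by auto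
  have "\<not> (x \<in> fst p \<and> x \<in> snd p)"
  proof
    assume h: "x \<in> fst p \<and> x \<in> snd p"
    have "\<delta> {x} {x}" using qp_refl[OF qp q(2)] .
    hence "\<delta> (fst p) (snd p)" using qp_mono[OF qp, of "{x}" "{x}" "fst p" "snd p"] h AB by auto
    thus False using AB by simp
  qed
  thus "q \<in> Sfar X (fst p) (snd p)" using q unfolding Sfar_def by auto
qed

lemma farpairsD: "p \<in> farpairs X \<delta> \<Longrightarrow> fst p \<subseteq> X \<and> snd p \<subseteq> X \<and> \<not> \<delta> (fst p) (snd p)"
  by (cases p) (simp add: farpairs_def)

lemma Sfar_far: "(A,B) \<in> farpairs X \<delta> \<Longrightarrow> (X \<times> X) \<inter> Sfar X A B \<in> V0 X \<delta>"
  by (rule V0I[of _ _ "{(A,B)}"]) auto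

lemma V0_cover:
  assumes qp: "quasi_proximity X \<delta>" and F: "finite F" "F \<subseteq> farpairs X \<delta>"
    and A: "A \<subseteq> X" and B: "B \<subseteq> X"
    and disj: "(A \<times> B) \<inter> ((X \<times> X) \<inter> \<Inter> ((\<lambda>p. Sfar X (fst p) (snd p)) ` F)) = {}"
  shows "\<not> \<delta> A B"
proof (rule qp_cover[OF qp F(1) _ A B])
  show "\<forall>(P,Q)\<in>F. P \<subseteq> X \<and> Q \<subseteq> X \<and> \<not> \<delta> P Q" using F(2) unfolding farpairs_def by blast
  show "\<forall>a\<in>A. \<forall>b\<in>B. \<exists>p\<in>F. a \<in> fst p \<and> b \<in> snd p"
  proof (intro ballI)
    fix a b assume ab: "a \<in> A" "b \<in> B"
    hence "(a,b) \<notin> \<Inter> ((\<lambda>p. Sfar X (fst p) (snd p)) ` F)" using disj A B by blast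
    then obtain p where p: "p \<in> F" "(a,b) \<notin> Sfar X (fst p) (snd p)" by blast
    hence "a \<in> fst p \<and> b \<in> snd p" using ab A B unfolding Sfar_def by blast
    thus "\<exists>p\<in>F. a \<in> fst p \<and> b \<in> snd p" using p(1) by blast
  qed
qed


lemma quI:
  assumes "\<V> \<subseteq> Pow (X \<times> X)" "\<V> \<noteq> {}"
    "\<And>U W. U \<in> \<V> \<Longrightarrow> U \<subseteq> W \<Longrightarrow> W \<subseteq> X \<times> X \<Longrightarrow> W \<in> \<V>"
    "\<And>U W. U \<in> \<V> \<Longrightarrow> W \<in> \<V> \<Longrightarrow> U \<inter> W \<in> \<V>"
    "\<And>U. U \<in> \<V> \<Longrightarrow> Id_on X \<subseteq> U"
    "\<And>U. U \<in> \<V> \<Longrightarrow> \<exists>W\<in>\<V>. W O W \<subseteq> U"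
  shows "quasi_uniformity X \<V>"
  unfolding quasi_uniformity_def
proof (intro conjI)
  show "\<V> \<subseteq> Pow (X \<times> X)" by (rule assms(1))
  show "\<V> \<noteq> {}" by (rule assms(2))
  show "\<forall>U\<in>\<V>. \<forall>W. U \<subseteq> W \<and> W \<subseteq> X \<times> X \<longrightarrow> W \<in> \<V>" using assms(3) by blast
  show "\<forall>U\<in>\<V>. \<forall>W\<in>\<V>. U \<inter> W \<in> \<V>" using assms(4) by blast
  show "\<forall>U\<in>\<V>. Id_on X \<subseteq> U" using assms(5) by blast
  show "\<forall>U\<in>\<V>. \<exists>W\<in>\<V>. W O W \<subseteq> U" using assms(6) by blast
qed

lemma quD1: "quasi_uniformity X \<V> \<Longrightarrow> \<V> \<subseteq> Pow (X \<times> X)"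
  unfolding quasi_uniformity_def by (rule conjunct1)
lemma quD2: "quasi_uniformity X \<V> \<Longrightarrow> \<V> \<noteq> {}"
  unfolding quasi_uniformity_def by (rule conjunct1[OF conjunct2])
lemma quD3': "quasi_uniformity X \<V> \<Longrightarrow> \<forall>U\<in>\<V>. \<forall>W. U \<subseteq> W \<and> W \<subseteq> X \<times> X \<longrightarrow> W \<in> \<V>"
  unfolding quasi_uniformity_def by (rule conjunct1[OF conjunct2[OF conjunct2]])
lemma quD4': "quasi_uniformity X \<V> \<Longrightarrow> \<forall>U\<in>\<V>. \<forall>W\<in>\<V>. U \<inter> W \<in> \<V>"
  unfolding quasi_uniformity_def by (rule conjunct1[OF conjunct2[OF conjunct2[OF conjunct2]]])
lemma quD5': "quasi_uniformity X \<V> \<Longrightarrow> \<forall>U\<in>\<V>. Id_on X \<subseteq> U"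
  unfolding quasi_uniformity_def by (rule conjunct1[OF conjunct2[OF conjunct2[OF conjunct2[OF conjunct2]]]])
lemma quD3: "quasi_uniformity X \<V> \<Longrightarrow> U \<in> \<V> \<Longrightarrow> U \<subseteq> W \<Longrightarrow> W \<subseteq> X \<times> X \<Longrightarrow> W \<in> \<V>"
  using quD3' by blast
lemma quD4: "quasi_uniformity X \<V> \<Longrightarrow> U \<in> \<V> \<Longrightarrow> W \<in> \<V> \<Longrightarrow> U \<inter> W \<in> \<V>"
  using quD4' by blast
lemma quD5: "quasi_uniformity X \<V> \<Longrightarrow> U \<in> \<V> \<Longrightarrow> Id_on X \<subseteq> U"
  using quD5' by blast
lemma quXX: "quasi_uniformity X \<V> \<Longrightarrow> X \<times> X \<in> \<V>"
proof -
  assume q: "quasi_uniformity X \<V>"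
  obtain U where "U \<in> \<V>" using quD2[OF q] by blast
  moreover have "U \<subseteq> X \<times> X" using quD1[OF q] calculation by blast
  ultimately show ?thesis using quD3[OF q] by blast
qed

lemma V0_qu:
  assumes qp: "quasi_proximity X \<delta>"
  shows "quasi_uniformity X (V0 X \<delta>)"
proof (rule quI)
  show "V0 X \<delta> \<subseteq> Pow (X \<times> X)" by (auto elim: V0E)
  have "X \<times> X \<in> V0 X \<delta>" by (rule V0I[of _ _ "{}"]) auto
  thus "V0 X \<delta> \<noteq> {}" by blast
next
  fix U W assume "U \<in> V0 X \<delta>" "U \<subseteq> W" "W \<subseteq> X \<times> X"
  thus "W \<in> V0 X \<delta>" by (elim V0E) (rule V0I, auto)
next
  fix U W assume U: "U \<in> V0 X \<delta>" and W: "W \<in> V0 X \<delta>"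
  from U obtain F where F: "U \<subseteq> X \<times> X" "finite F" "F \<subseteq> farpairs X \<delta>" "(X \<times> X) \<inter> \<Inter> ((\<lambda>p. Sfar X (fst p) (snd p)) ` F) \<subseteq> U"
    by (rule V0E)
  from W obtain G where G: "finite G" "G \<subseteq> farpairs X \<delta>" "(X \<times> X) \<inter> \<Inter> ((\<lambda>p. Sfar X (fst p) (snd p)) ` G) \<subseteq> W"
    by (rule V0E)
  have fu: "finite (F \<union> G)" using F(2) G(1) by simp
  have su: "F \<union> G \<subseteq> farpairs X \<delta>" using F(3) G(2) by simp
  have iu: "(X \<times> X) \<inter> \<Inter> ((\<lambda>p. Sfar X (fst p) (snd p)) ` (F \<union> G)) \<subseteq> U \<inter> W"
    using F(4) G(3) by blast
  have xu: "U \<inter> W \<subseteq> X \<times> X" using F(1) by blast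
  show "U \<inter> W \<in> V0 X \<delta>" by (rule V0I[OF xu fu su iu])
next
  fix U assume U: "U \<in> V0 X \<delta>"
  from U obtain F where F: "finite F" "F \<subseteq> farpairs X \<delta>" "(X \<times> X) \<inter> \<Inter> ((\<lambda>p. Sfar X (fst p) (snd p)) ` F) \<subseteq> U"
    by (rule V0E)
  show "Id_on X \<subseteq> U"
  proof -
    have "Id_on X \<subseteq> (X \<times> X) \<inter> \<Inter> ((\<lambda>p. Sfar X (fst p) (snd p)) ` F)"
    proof
      fix q assume q: "q \<in> Id_on X"
      have "q \<in> X \<times> X" using q by (auto simp: Id_on_def)
      moreover have "\<forall>S \<in> (\<lambda>p. Sfar X (fst p) (snd p)) ` F. q \<in> S"
      proof
        fix S assume "S \<in> (\<lambda>p. Sfar X (fst p) (snd p)) ` F"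
        then obtain p where pS: "p \<in> F" "S = Sfar X (fst p) (snd p)" by blast
        show "q \<in> S" using Sfar_diag[OF qp, of p] pS F(2) q by blast
      qed
      ultimately show "q \<in> (X \<times> X) \<inter> \<Inter> ((\<lambda>p. Sfar X (fst p) (snd p)) ` F)" by blast
    qed
    thus ?thesis using F(3) by blast
  qed
next
  fix U assume U: "U \<in> V0 X \<delta>"
  from U obtain F where F: "finite F" "F \<subseteq> farpairs X \<delta>" "(X \<times> X) \<inter> \<Inter> ((\<lambda>p. Sfar X (fst p) (snd p)) ` F) \<subseteq> U"
    by (rule V0E)
  have "\<forall>p\<in>F. \<exists>C. C \<subseteq> X \<and> \<not> \<delta> (fst p) C \<and> \<not> \<delta> (X - C) (snd p)"
  proof
    fix p assume "p \<in> F"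
    hence "fst p \<subseteq> X" "snd p \<subseteq> X" "\<not> \<delta> (fst p) (snd p)" using farpairsD[of p X \<delta>] F(2) by auto
    thus "\<exists>C. C \<subseteq> X \<and> \<not> \<delta> (fst p) C \<and> \<not> \<delta> (X - C) (snd p)"
      using qp_split[OF qp] by blast
  qed
  then obtain g where g: "\<And>p. p \<in> F \<Longrightarrow> g p \<subseteq> X \<and> \<not> \<delta> (fst p) (g p) \<and> \<not> \<delta> (X - g p) (snd p)"
    by metis
  define G where "G = (\<lambda>p. (fst p, g p)) ` F \<union> (\<lambda>p. (X - g p, snd p)) ` F"
  have Gf: "finite G" using F(1) unfolding G_def by simp
  have Gs: "G \<subseteq> farpairs X \<delta>"
  proof
    fix q assume "q \<in> G"
    then obtain p where p: "p \<in> F" "q = (fst p, g p) \<or> q = (X - g p, snd p)" unfolding G_def by blast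
    have "fst p \<subseteq> X" "snd p \<subseteq> X" using farpairsD[of p X \<delta>] p(1) F(2) by auto
    thus "q \<in> farpairs X \<delta>" using g[OF p(1)] p(2) unfolding farpairs_def by auto
  qed
  define W where "W = (X \<times> X) \<inter> \<Inter> ((\<lambda>p. Sfar X (fst p) (snd p)) ` G)"
  have WX: "W \<subseteq> X \<times> X" unfolding W_def by blast
  have "W \<in> V0 X \<delta>" by (rule V0I[OF WX Gf Gs]) (simp add: W_def)
  moreover have "W O W \<subseteq> U"
  proof
    fix q assume "q \<in> W O W"
    then obtain x y z where q: "q = (x,z)" and xy: "(x,y) \<in> W" and yz: "(y,z) \<in> W" by auto
    have "(x,z) \<in> (X \<times> X) \<inter> \<Inter> ((\<lambda>p. Sfar X (fst p) (snd p)) ` F)"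
    proof (intro IntI InterI)
      show "(x,z) \<in> X \<times> X" using xy yz WX by blast
    next
      fix S assume "S \<in> (\<lambda>p. Sfar X (fst p) (snd p)) ` F"
      then obtain p where pS: "p \<in> F" "S = Sfar X (fst p) (snd p)" by blast
      have i1: "(fst p, g p) \<in> G" unfolding G_def using pS(1) by blast
      have i2: "(X - g p, snd p) \<in> G" unfolding G_def using pS(1) by blast
      have 1: "(x,y) \<in> Sfar X (fst p) (g p)"
        using xy i1 unfolding W_def by force
      have 2: "(y,z) \<in> Sfar X (X - g p) (snd p)"
        using yz i2 unfolding W_def by force
      have xyX: "(x,y) \<in> X \<times> X" "(y,z) \<in> X \<times> X" using xy yz WX by blast+
      show "(x,z) \<in> S" using 1 2 pS(2) xyX unfolding Sfar_def by auto
    qed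
    thus "q \<in> U" using q F(3) by blast
  qed
  ultimately show "\<exists>W\<in>V0 X \<delta>. W O W \<subseteq> U" by blast
qed


lemma V0_prox:
  assumes qp: "quasi_proximity X \<delta>"
  shows "qu_proximity X (V0 X \<delta>) = \<delta>"
proof (intro ext iffI)
  fix A B assume h: "qu_proximity X (V0 X \<delta>) A B"
  hence A: "A \<subseteq> X" and B: "B \<subseteq> X" and all: "\<forall>U\<in>V0 X \<delta>. (A \<times> B) \<inter> U \<noteq> {}"
    unfolding qu_proximity_def by blast+
  show "\<delta> A B"
  proof (rule ccontr)
    assume "\<not> \<delta> A B"
    hence "(A,B) \<in> farpairs X \<delta>" using A B unfolding farpairs_def by blast
    hence "(X \<times> X) \<inter> Sfar X A B \<in> V0 X \<delta>" by (rule Sfar_far)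
    moreover have "(A \<times> B) \<inter> ((X \<times> X) \<inter> Sfar X A B) = {}" unfolding Sfar_def by blast
    ultimately show False using all by blast
  qed
next
  fix A B assume d: "\<delta> A B"
  have A: "A \<subseteq> X" and B: "B \<subseteq> X" using qp_sub[OF qp d] by auto
  have "\<forall>U\<in>V0 X \<delta>. (A \<times> B) \<inter> U \<noteq> {}"
  proof (intro ballI notI)
    fix U assume U: "U \<in> V0 X \<delta>" and e: "(A \<times> B) \<inter> U = {}"
    from U obtain F where F: "finite F" "F \<subseteq> farpairs X \<delta>" "(X \<times> X) \<inter> \<Inter> ((\<lambda>p. Sfar X (fst p) (snd p)) ` F) \<subseteq> U"
      by (rule V0E)
    have "(A \<times> B) \<inter> ((X \<times> X) \<inter> \<Inter> ((\<lambda>p. Sfar X (fst p) (snd p)) ` F)) = {}" using e F(3) by blast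
    hence "\<not> \<delta> A B" by (rule V0_cover[OF qp F(1,2) A B])
    thus False using d by simp
  qed
  thus "qu_proximity X (V0 X \<delta>) A B" unfolding qu_proximity_def using A B by blast
qed

lemma quInter:
  assumes q: "quasi_uniformity X W" and fin: "finite F"
  shows "(\<forall>p\<in>F. f p \<in> W) \<Longrightarrow> (X \<times> X) \<inter> \<Inter> (f ` F) \<in> W"
  using fin
proof (induction F rule: finite_induct)
  case empty
  then show ?case using quXX[OF q] by simp
next
  case (insert p F)
  have fp: "f p \<in> W" using insert(4) by simp
  have r: "(X \<times> X) \<inter> \<Inter> (f ` F) \<in> W" using insert(3,4) by simp
  have "(X \<times> X) \<inter> \<Inter> (f ` insert p F) = f p \<inter> ((X \<times> X) \<inter> \<Inter> (f ` F))" by auto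
  thus ?case using quD4[OF q fp r] by simp
qed

lemma V0_min:
  assumes qp: "quasi_proximity X \<delta>" and W: "W \<in> prox_class X \<delta>"
  shows "V0 X \<delta> \<subseteq> W"
proof
  have q: "quasi_uniformity X W" and pw: "qu_proximity X W = \<delta>" using W unfolding prox_class_def by auto
  fix U assume U: "U \<in> V0 X \<delta>"
  from U obtain F where F: "U \<subseteq> X \<times> X" "finite F" "F \<subseteq> farpairs X \<delta>" "(X \<times> X) \<inter> \<Inter> ((\<lambda>p. Sfar X (fst p) (snd p)) ` F) \<subseteq> U"
    by (rule V0E)
  have each: "\<forall>p\<in>F. (X \<times> X) \<inter> Sfar X (fst p) (snd p) \<in> W"
  proof
    fix p assume p: "p \<in> F"
    have fp: "fst p \<subseteq> X" "snd p \<subseteq> X" "\<not> \<delta> (fst p) (snd p)" using farpairsD[of p X \<delta>] p F(3) by auto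
    hence "\<not> qu_proximity X W (fst p) (snd p)" using pw by simp
    then obtain U' where U': "U' \<in> W" "(fst p \<times> snd p) \<inter> U' = {}" using fp unfolding qu_proximity_def by blast
    have "U' \<subseteq> X \<times> X" using quD1[OF q] U'(1) by blast
    hence "U' \<subseteq> (X \<times> X) \<inter> Sfar X (fst p) (snd p)" using U'(2) unfolding Sfar_def by blast
    thus "(X \<times> X) \<inter> Sfar X (fst p) (snd p) \<in> W" using quD3[OF q U'(1)] by blast
  qed
  have I: "(X \<times> X) \<inter> \<Inter> ((\<lambda>p. (X \<times> X) \<inter> Sfar X (fst p) (snd p)) ` F) \<in> W"
    by (rule quInter[OF q F(2) each])
  have "(X \<times> X) \<inter> \<Inter> ((\<lambda>p. (X \<times> X) \<inter> Sfar X (fst p) (snd p)) ` F) \<subseteq> U" using F(4) by blast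
  thus "U \<in> W" using quD3[OF q I _ F(1)] by blast
qed

lemma coarsest_eq:
  assumes qp: "quasi_proximity X \<delta>"
  shows "coarsest_qu X \<delta> = V0 X \<delta>"
proof -
  have V0p: "V0 X \<delta> \<in> prox_class X \<delta>" unfolding prox_class_def using V0_qu[OF qp] V0_prox[OF qp] by blast
  show ?thesis unfolding coarsest_qu_def
  proof (rule the_equality)
    show "V0 X \<delta> \<in> prox_class X \<delta> \<and> (\<forall>\<W>\<in>prox_class X \<delta>. V0 X \<delta> \<subseteq> \<W>)"
      using V0p V0_min[OF qp] by blast
  next
    fix V assume "V \<in> prox_class X \<delta> \<and> (\<forall>\<W>\<in>prox_class X \<delta>. V \<subseteq> \<W>)"
    hence "V \<subseteq> V0 X \<delta>" "V0 X \<delta> \<subseteq> V" using V0p V0_min[OF qp] by blast+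
    thus "V = V0 X \<delta>" by blast
  qed
qed

theorem lemma2p1:
  fixes T :: "'a topology" and \<delta> :: "'a set \<Rightarrow> 'a set \<Rightarrow> bool" and \<V> :: "('a \<times> 'a) set set"
  assumes "quasi_proximity (topspace T) \<delta>"
    and "\<forall>G. openin T G \<longleftrightarrow> qp_open (topspace T) \<delta> G"
    and "qu_transitive (coarsest_qu (topspace T) \<delta>)"
    and "\<V> \<in> Trans_qu T"
    and "coarsest_qu (topspace T) \<delta> \<subseteq> \<V>"
  shows "\<V> \<in> prox_class (topspace T) \<delta> \<longleftrightarrow>
    (\<forall>N. openin T N \<and> U_set (topspace T) N \<in> \<V> \<longrightarrow> N \<in> B_set T (coarsest_qu (topspace T) \<delta>))"
proof -
  define X where "X = topspace T"
  have qp: "quasi_proximity X \<delta>" using assms(1) X_def by simp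
  have C: "coarsest_qu X \<delta> = V0 X \<delta>" by (rule coarsest_eq[OF qp])
  have Cq: "quasi_uniformity X (V0 X \<delta>)" by (rule V0_qu[OF qp])
  have Cp: "qu_proximity X (V0 X \<delta>) = \<delta>" by (rule V0_prox[OF qp])
  have sub: "V0 X \<delta> \<subseteq> \<V>" using assms(5) C X_def by simp
  have Vq: "quasi_uniformity X \<V>" and Vc: "qu_compatible T \<V>" and Vt: "qu_transitive \<V>"
    using assms(4) X_def unfolding Trans_qu_def by auto
  show ?thesis unfolding X_def[symmetric] C
  proof
    assume V: "\<V> \<in> prox_class X \<delta>"
    hence pV: "qu_proximity X \<V> = \<delta>" unfolding prox_class_def by simp
    show "\<forall>N. openin T N \<and> U_set X N \<in> \<V> \<longrightarrow> N \<in> B_set T (V0 X \<delta>)"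
    proof (intro allI impI)
      fix N assume N: "openin T N \<and> U_set X N \<in> \<V>"
      have NX: "N \<subseteq> X" using N openin_subset X_def by blast
      have "(N \<times> (X - N)) \<inter> U_set X N = {}" unfolding U_set_def by blast
      hence "\<not> qu_proximity X \<V> N (X - N)" unfolding qu_proximity_def using N by blast
      hence "\<not> \<delta> N (X - N)" using pV by simp
      hence "(N, X - N) \<in> farpairs X \<delta>" using NX unfolding farpairs_def by blast
      hence m: "(X \<times> X) \<inter> Sfar X N (X - N) \<in> V0 X \<delta>" by (rule Sfar_far)
      have "(X \<times> X) \<inter> Sfar X N (X - N) \<subseteq> U_set X N" unfolding Sfar_def U_set_def by blast
      moreover have "U_set X N \<subseteq> X \<times> X" using NX unfolding U_set_def by blast
      ultimately have "U_set X N \<in> V0 X \<delta>" using quD3[OF Cq m] by blast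
      thus "N \<in> B_set T (V0 X \<delta>)" unfolding B_set_def X_def[symmetric] using N by blast
    qed
  next
    assume H: "\<forall>N. openin T N \<and> U_set X N \<in> \<V> \<longrightarrow> N \<in> B_set T (V0 X \<delta>)"
    have "qu_proximity X \<V> = \<delta>"
    proof (intro ext iffI)
      fix A B assume "qu_proximity X \<V> A B"
      hence "qu_proximity X (V0 X \<delta>) A B" using sub unfolding qu_proximity_def by blast
      thus "\<delta> A B" using Cp by simp
    next
      fix A B assume d: "\<delta> A B"
      have A: "A \<subseteq> X" and B: "B \<subseteq> X" using qp_sub[OF qp d] by auto
      have "\<forall>U\<in>\<V>. (A \<times> B) \<inter> U \<noteq> {}"
      proof (intro ballI notI)
        fix U assume U: "U \<in> \<V>" and e: "(A \<times> B) \<inter> U = {}"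
        obtain W where W: "W \<in> \<V>" "W \<subseteq> U" "W O W \<subseteq> W"
          using Vt U unfolding qu_transitive_def by blast
        have WX: "W \<subseteq> X \<times> X" using quD1[OF Vq] W(1) by blast
        have WI: "Id_on X \<subseteq> W" using quD5[OF Vq W(1)] .
        define N where "N = W `` A"
        have NX: "N \<subseteq> X" unfolding N_def using WX by blast
        have AN: "A \<subseteq> N" unfolding N_def using WI A by (auto simp: Id_on_def)
        have BN: "B \<inter> N = {}" unfolding N_def using e W(2) by blast
        have "qu_open X \<V> N" unfolding qu_open_def
        proof (intro conjI ballI)
          show "N \<subseteq> X" by (rule NX)
        next
          fix y assume y: "y \<in> N"
          have "W `` {y} \<subseteq> N" using y W(3) unfolding N_def by blast
          thus "\<exists>U\<in>\<V>. U `` {y} \<subseteq> N" using W(1) by blast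
        qed
        hence oN: "openin T N" using Vc unfolding qu_compatible_def X_def by blast
        have "W \<subseteq> U_set X N"
        proof
          fix q assume q: "q \<in> W"
          obtain x y where xy: "q = (x,y)" by (cases q)
          have "x \<in> X" "y \<in> X" using q xy WX by blast+
          moreover have "x \<in> N \<Longrightarrow> y \<in> N" using q xy W(3) unfolding N_def by blast
          ultimately show "q \<in> U_set X N" unfolding U_set_def xy by blast
        qed
        moreover have "U_set X N \<subseteq> X \<times> X" using NX unfolding U_set_def by blast
        ultimately have "U_set X N \<in> \<V>" using quD3[OF Vq W(1)] by blast
        hence "N \<in> B_set T (V0 X \<delta>)" using H oN by blast
        hence UC: "U_set X N \<in> V0 X \<delta>" unfolding B_set_def X_def by simp
        have "qu_proximity X (V0 X \<delta>) A B" using Cp d by simp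
        hence "(A \<times> B) \<inter> U_set X N \<noteq> {}" using UC unfolding qu_proximity_def by blast
        moreover have "(A \<times> B) \<inter> U_set X N = {}" using AN BN unfolding U_set_def by blast
        ultimately show False by blast
      qed
      thus "qu_proximity X \<V> A B" unfolding qu_proximity_def using A B by blast
    qed
    thus "\<V> \<in> prox_class X \<delta>" unfolding prox_class_def using Vq by blast
  qed
qed

end
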